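(* For $(\lambda,z)\in(0,1]\times(0,1]$, the $2N\times2N$ matrix $$K(\lambda,z)=\begin{pmatrix}0&B(1;\lambda,z)\\ B(-1;\lambda,z)&0\end{pmatrix}$$ has non-negative entries and is irreducible. For $(\lambda,z)\in(0,1)\times(0,1]$, the spectral radius of $K(\lambda,z)$ is strictly less than $1$.
   Context: Fix an integer $N\ge 3$. Let $\mathcal G_N$ be the groupoid with object set $\{1,\dots,N\}$ generated by arrows $A_{i,j}^{(k)}$, $i\neq j\in\{1,\dots,N\}$, $k\in\{-1,1\}$, with source $i$ and target $j$, subject to the relations $A_{i,j}^{(k)}A_{j,\ell}^{(k)}=A_{i,\ell}^{(k)}$ for all $i,j,\ell$, $k$, with the convention $A_{i,i}^{(k)}:=e_i$ (unit at object $i$). Let $\mathcal A$ be its arrow set. Every arrow has a unique reduced representation: either empty or $\prod_{\ell=1}^dA_{i_\ell,j_\ell}^{(k_\ell)}$ with alternating upper indices and $i_\ell\ne j_\ell$. A metric $|\cdot|_{\mathcal K}$ is given by values $|A_{i,j}^{(k)}|_{\mathcal K}\ge0$ on generators, $|e_i|_{\mathcal K}=0$, and $|w|_{\mathcal K}=\sum_\ell|A_{i_\ell,j_\ell}^{(k_\ell)}|_{\mathcal K}$ over the reduced representation of $w$. Let $\{W_n\}_{n\ge0}$ be the Markov chain on $\mathcal A$ with $P(W_{n+1}=y\mid W_n=x)=p_{i,j}^{(k)}$ if $x^{-1}y=A_{i,j}^{(k)}$ with $i\ne j$ and $0$ otherwise, where $p_{i,j}^{(k)}\in(0,1)$ and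 $\sum_{j\ne i}\sum_{k=\pm1}p_{i,j}^{(k)}=1$ for each $i$; $E_x$ denotes expectation with $W_0=x$. For $x\in\mathcal A$ let $T(0,x)=\inf\{n\ge0:W_n=W_0x\}$ (possibly $\infty$), and $R_{i,j}^{(k)}(\lambda)=E_{e_i}[\lambda^{T(0,A_{i,j}^{(k)})}]$ for $\lambda\in(0,1]$. Let $B(k;\lambda,z)$ be the $N\times N$ matrix with entries $[B(k;\lambda,z)]_{i,j}=(1-\delta_{i,j})z^{|A_{i,j}^{(k)}|_{\mathcal K}}R_{i,j}^{(k)}(\lambda)$. *)

theory Defs
  imports Complex_Main "Jordan_Normal_Form.Spectral_Radius"
begin

(* A generator A_{i,j}^{(k)} is the triple (i,j,k).  An arrow of the groupoid G_N is
   represented by its reduced representation: a pair (s, w) where s is the source object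
   and w is the reduced word (list of generators, consecutive ones composable, alternating
   upper indices, i \<noteq> j). *)
type_synonym gen = "nat \<times> nat \<times> int"
type_synonym arrow = "nat \<times> gen list"

fun gsrc :: "gen \<Rightarrow> nat" where "gsrc (i, j, k) = i"
fun gtgt :: "gen \<Rightarrow> nat" where "gtgt (i, j, k) = j"
fun gidx :: "gen \<Rightarrow> int" where "gidx (i, j, k) = k"

definition unit_arrow :: "nat \<Rightarrow> arrow" where "unit_arrow i = (i, [])"

definition tgt :: "arrow \<Rightarrow> nat" where
  "tgt x = (if snd x = [] then fst x else gtgt (last (snd x)))"

(* right multiplication of an arrow x with target i by the generator A_{i,j}^{(k)},
   using A_{a,i}^{(k)} A_{i,j}^{(k)} = A_{a,j}^{(k)} and A_{a,a}^{(k)} = e_a *)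
definition mult_gen :: "arrow \<Rightarrow> nat \<Rightarrow> int \<Rightarrow> arrow" where
  "mult_gen x j k =
     (let w = snd x; i = tgt x in
      if w = [] then (fst x, [(i, j, k)])
      else if gidx (last w) = k then
        (if gsrc (last w) = j then (fst x, butlast w)
         else (fst x, butlast w @ [(gsrc (last w), j, k)]))
      else (fst x, w @ [(i, j, k)]))"

fun walk :: "arrow \<Rightarrow> (nat \<times> int) list \<Rightarrow> arrow" where
  "walk x [] = x"
| "walk x ((j, k) # ss) = walk (mult_gen x j k) ss"

fun path_prob :: "(nat \<Rightarrow> nat \<Rightarrow> int \<Rightarrow> real) \<Rightarrow> arrow \<Rightarrow> (nat \<times> int) list \<Rightarrow> real" where
  "path_prob p x [] = 1"
| "path_prob p x ((j, k) # ss) = p (tgt x) j k * path_prob p (mult_gen x j k) ss"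

fun admissible :: "nat \<Rightarrow> arrow \<Rightarrow> (nat \<times> int) list \<Rightarrow> bool" where
  "admissible N x [] = True"
| "admissible N x ((j, k) # ss) =
     (j \<in> {1..N} \<and> j \<noteq> tgt x \<and> k \<in> {-1, 1} \<and> admissible N (mult_gen x j k) ss)"

(* P_x(T(0,y) = n): W_0 = x, T(0,y) = first n with W_n = W_0 y *)
definition first_hit_prob ::
  "nat \<Rightarrow> (nat \<Rightarrow> nat \<Rightarrow> int \<Rightarrow> real) \<Rightarrow> arrow \<Rightarrow> arrow \<Rightarrow> nat \<Rightarrow> real" where
  "first_hit_prob N p x target n =
     (\<Sum>ss \<in> {ss. length ss = n \<and> set ss \<subseteq> {1..N} \<times> {-1, 1} \<and> admissible N x ss
                 \<and> walk x ss = target \<and> (\<forall>m<n. walk x (take m ss) \<noteq> target)}.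
        path_prob p x ss)"

(* R_{i,j}^{(k)}(lam) = E_{e_i}[lam^{T(0,A_{i,j}^{(k)})}] = \<Sum>_n lam^n P(T = n)
   (the event T = \<infinity> contributes 0) *)
definition R_fun :: "nat \<Rightarrow> (nat \<Rightarrow> nat \<Rightarrow> int \<Rightarrow> real) \<Rightarrow> nat \<Rightarrow> nat \<Rightarrow> int \<Rightarrow> real \<Rightarrow> real" where
  "R_fun N p i j k lam =
     (\<Sum>n. lam ^ n * first_hit_prob N p (unit_arrow i) (i, [(i, j, k)]) n)"

(* [B(k;lam,z)]_{i,j}, for i,j \<in> {1..N}; Kn i j k = |A_{i,j}^{(k)}|_K *)
definition B_entry ::
  "nat \<Rightarrow> (nat \<Rightarrow> nat \<Rightarrow> int \<Rightarrow> real) \<Rightarrow> (nat \<Rightarrow> nat \<Rightarrow> int \<Rightarrow> real) \<Rightarrow> int \<Rightarrow> real \<Rightarrow> real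
    \<Rightarrow> nat \<Rightarrow> nat \<Rightarrow> real" where
  "B_entry N p Kn k lam z i j = (if i = j then 0 else z powr Kn i j k * R_fun N p i j k lam)"

(* the 2N \<times> 2N block matrix K = [[0, B(1)], [B(-1), 0]], 0-based indices *)
definition K_mat ::
  "nat \<Rightarrow> (nat \<Rightarrow> nat \<Rightarrow> int \<Rightarrow> real) \<Rightarrow> (nat \<Rightarrow> nat \<Rightarrow> int \<Rightarrow> real) \<Rightarrow> real \<Rightarrow> real \<Rightarrow> real mat" where
  "K_mat N p Kn lam z = mat (2*N) (2*N) (%(a, b).
      if a < N \<and> N \<le> b then B_entry N p Kn 1 lam z (a+1) (b-N+1)
      else if N \<le> a \<and> b < N then B_entry N p Kn (-1) lam z (a-N+1) (b+1)
      else 0)"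

definition nonneg_mat :: "real mat \<Rightarrow> bool" where
  "nonneg_mat A = (\<forall>a < dim_row A. \<forall>b < dim_col A. A $$ (a, b) \<ge> 0)"

definition irreducible_mat :: "real mat \<Rightarrow> bool" where
  "irreducible_mat A = (\<forall>a < dim_row A. \<forall>b < dim_row A. \<exists>m. (A ^\<^sub>m m) $$ (a, b) > 0)"

end

theory Submission
  imports Defs
begin

fun wfw :: "nat \<Rightarrow> gen list \<Rightarrow> bool" where
  "wfw s [] = True"
| "wfw s (g # gs) = (gsrc g = s \<and> gtgt g \<noteq> s \<and> (gs \<noteq> [] \<longrightarrow> gidx (hd gs) \<noteq> gidx g) \<and> wfw (gtgt g) gs)"

definition wfa :: "arrow \<Rightarrow> bool" where "wfa x = wfw (fst x) (snd x)"

lemma tgt_snoc: "tgt (s, w @ [g]) = gtgt g" by (simp add: tgt_def)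
lemma tgt_nil: "tgt (s, []) = s" by (simp add: tgt_def)

lemma wfw_snoc: "wfw s (w @ [g]) \<longleftrightarrow> wfw s w \<and> gsrc g = tgt (s, w) \<and> gtgt g \<noteq> gsrc g
   \<and> (w \<noteq> [] \<longrightarrow> gidx (last w) \<noteq> gidx g)"
proof (induction w arbitrary: s)
  case Nil then show ?case by (auto simp: tgt_def)
next
  case (Cons a w)
  show ?case
  proof (cases w)
    case Nil then show ?thesis by (auto simp: tgt_def)
  next
    case (Cons b w') 
    have "tgt (s, a # w) = tgt (gtgt a, w)" using Cons by (simp add: tgt_def)
    then show ?thesis using Cons.IH[of "gtgt a"] Cons by auto
  qed
qed

lemma wfw_snoc2: "wfw s (w @ [g, h]) \<longleftrightarrow> wfw s (w @ [g]) \<and> gsrc h = gtgt g \<and> gtgt h \<noteq> gsrc h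
   \<and> gidx g \<noteq> gidx h"
  using wfw_snoc[of s "w @ [g]" h] by (simp add: tgt_def)

lemma butlast2[simp]: "butlast (w @ [g, h]) = w @ [g]"
  by (metis append.assoc append_Cons append_Nil butlast_snoc)

lemma wfw_butlast: "wfw s w \<Longrightarrow> wfw s (butlast w)"
  by (cases w rule: rev_cases) (auto simp: wfw_snoc)

lemma mult_gen_fst: "fst (mult_gen x j k) = fst x"
  by (simp add: mult_gen_def Let_def)

lemma mult_gen_wf:
  assumes "wfa x" "j \<noteq> tgt x"
  shows "wfa (mult_gen x j k) \<and> tgt (mult_gen x j k) = j"
proof (cases x)
  case (Pair s w)
  show ?thesis
  proof (cases w rule: rev_cases)
    case Nil
    then show ?thesis using assms Pair by (auto simp: mult_gen_def wfa_def tgt_def)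
  next
    case (snoc w' g)
    obtain a b c where g: "g = (a, b, c)" by (cases g)
    have wf': "wfw s w'" and ga: "a = tgt (s, w')" and ab: "b \<noteq> a"
      and alt: "w' \<noteq> [] \<longrightarrow> gidx (last w') \<noteq> c"
      using assms(1) Pair snoc g by (auto simp: wfa_def wfw_snoc)
    have tx: "tgt x = b" using Pair snoc g by (simp add: tgt_def)
    show ?thesis
    proof (cases "c = k")
      case True
      show ?thesis
      proof (cases "a = j")
        case True
        then show ?thesis using \<open>c = k\<close> Pair snoc g wf' ga
          by (simp add: mult_gen_def Let_def wfa_def)
      next
        case False
        have "wfw s (w' @ [(a, j, k)])" using wf' ga False alt True by (simp add: wfw_snoc)
        then show ?thesis using \<open>c = k\<close> False Pair snoc g
          by (simp add: mult_gen_def Let_def wfa_def tgt_def)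
      qed
    next
      case False
      have "wfw s (w' @ [g])" using assms(1) Pair snoc by (simp add: wfa_def)
      then have "wfw s (w @ [(b, j, k)])" using snoc g False assms(2) tx
        wfw_snoc[of s "w' @ [(a, b, c)]" "(b, j, k)"] by (simp add: tgt_def)
      then show ?thesis using False Pair snoc g tx
        by (simp add: mult_gen_def Let_def wfa_def tgt_def del: append_assoc)
    qed
  qed
qed

lemma mult_gen_rel:
  assumes "wfa z" "tgt z = a" "b \<noteq> a" "j \<noteq> b"
  shows "mult_gen (mult_gen z b k) j k = (if j = a then z else mult_gen z j k)"
proof (cases z)
  case (Pair s w)
  show ?thesis
  proof (cases w rule: rev_cases)
    case Nil
    then show ?thesis using assms Pair by (auto simp: mult_gen_def tgt_def Let_def)
  next
    case (snoc w' g)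
    obtain c d e where g: "g = (c, d, e)" by (cases g)
    have wf': "wfw s w'" and ga: "c = tgt (s, w')" and cd: "d \<noteq> c"
      and alt: "w' \<noteq> [] \<longrightarrow> gidx (last w') \<noteq> e"
      using assms(1) Pair snoc g by (auto simp: wfa_def wfw_snoc)
    have da: "d = a" using assms(2) Pair snoc g by (simp add: tgt_def)
    show ?thesis
    proof (cases "e = k")
      case True
      show ?thesis
      proof (cases "c = b")
        case True
        have "tgt (s, w') = b" using ga True by simp
        then show ?thesis using \<open>e = k\<close> True Pair snoc g alt da assms(3,4)
          by (cases "w' = []") (auto simp: mult_gen_def Let_def tgt_def)
      next
        case False
        then show ?thesis using \<open>e = k\<close> Pair snoc g da cd
          by (auto simp: mult_gen_def Let_def tgt_def)
      qed
    next
      case False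
      then show ?thesis using Pair snoc g da assms
        by (auto simp: mult_gen_def Let_def tgt_def)
    qed
  qed
qed

definition letters :: "gen list \<Rightarrow> (nat \<times> int) list" where
  "letters w = map (\<lambda>g. (gtgt g, gidx g)) w"

lemma letters_simps[simp]: "letters [] = []" "letters (w @ [g]) = letters w @ [(gtgt g, gidx g)]"
  "letters (g # w) = (gtgt g, gidx g) # letters w"
  by (simp_all add: letters_def)

lemma walk_append: "walk x (xs @ ys) = walk (walk x xs) ys"
  by (induction x xs rule: walk.induct) auto

lemma walk_snoc: "walk x (xs @ [(j, k)]) = mult_gen (walk x xs) j k"
  by (simp add: walk_append)

lemma admissible_append: "admissible N x (xs @ ys) \<longleftrightarrow> admissible N x xs \<and> admissible N (walk x xs) ys"
  by (induction N x xs rule: admissible.induct) auto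

lemma path_prob_append: "path_prob p x (xs @ ys) = path_prob p x xs * path_prob p (walk x xs) ys"
  by (induction p x xs rule: path_prob.induct) auto

lemma walk_wf: "wfa x \<Longrightarrow> admissible N x ss \<Longrightarrow> wfa (walk x ss) \<and> fst (walk x ss) = fst x"
proof (induction x ss rule: walk.induct)
  case (1 x) then show ?case by simp
next
  case (2 x j k ss)
  then have "wfa (mult_gen x j k)" using mult_gen_wf by auto
  then show ?case using 2 by (simp add: mult_gen_fst)
qed

lemma tgt_indep:
  assumes "wfa x" "wfa y" "tgt x = tgt y"
  shows "admissible N x ss = admissible N y ss \<and>
    (admissible N x ss \<longrightarrow> tgt (walk x ss) = tgt (walk y ss) \<and> path_prob p x ss = path_prob p y ss)"
  using assms
proof (induction ss arbitrary: x y)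
  case Nil then show ?case by simp
next
  case (Cons s ss)
  obtain j k where s: "s = (j, k)" by (cases s)
  show ?case
  proof (cases "j \<noteq> tgt x")
    case True
    have "wfa (mult_gen x j k) \<and> tgt (mult_gen x j k) = j" "wfa (mult_gen y j k) \<and> tgt (mult_gen y j k) = j"
      using mult_gen_wf Cons.prems True by auto
    then show ?thesis using Cons.IH[of "mult_gen x j k" "mult_gen y j k"] s Cons.prems by auto
  next
    case False
    then show ?thesis using s Cons.prems by auto
  qed
qed

lemma wfw_prefix: "wfw s (u @ v) \<Longrightarrow> wfw s u"
  by (induction u arbitrary: s) (auto simp: hd_append)

lemma walk_letters_app:
  "wfw (fst x) (snd x @ w) \<Longrightarrow> walk x (letters w) = (fst x, snd x @ w)"
proof (induction w arbitrary: x)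
  case Nil then show ?case by simp
next
  case (Cons g w)
  obtain s v where x: "x = (s, v)" by (cases x)
  obtain a b c where g: "g = (a, b, c)" by (cases g)
  have w1: "wfw s (v @ [g])" using Cons.prems x
    using wfw_prefix[of s "v @ [g]" w] by simp
  have "mult_gen x b c = (s, v @ [g])" using w1 x g by (auto simp: mult_gen_def Let_def wfw_snoc tgt_def)
  then show ?case using Cons.IH[of "(s, v @ [g])"] Cons.prems x g by simp
qed

lemma walk_letters_wf:
  assumes "wfa x" "wfw (tgt x) w"
  shows "wfa (walk x (letters w)) \<and> tgt (walk x (letters w)) = tgt (tgt x, w)"
  using assms(2)
proof (induction w rule: rev_induct)
  case Nil then show ?case using assms by (simp add: tgt_def)
next
  case (snoc g w)
  have h: "wfw (tgt x) w" "gsrc g = tgt (tgt x, w)" "gtgt g \<noteq> gsrc g" using snoc.prems wfw_snoc by auto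
  then have "gtgt g \<noteq> tgt (walk x (letters w))" using snoc.IH by simp
  then show ?case using mult_gen_wf[of "walk x (letters w)" "gtgt g" "gidx g"] snoc.IH h
    by (simp add: walk_snoc tgt_snoc)
qed

lemma step_letters:
  assumes "wfa x" "wfw (tgt x) w" "j \<noteq> tgt (tgt x, w)"
  shows "mult_gen (walk x (letters w)) j k = walk x (letters (snd (mult_gen (tgt x, w) j k)))"
proof (cases w rule: rev_cases)
  case Nil
  have "mult_gen (tgt x, []) j k = (tgt x, [(tgt x, j, k)])" by (simp add: mult_gen_def tgt_def Let_def)
  then show ?thesis using Nil by simp
next
  case (snoc w' g)
  obtain a b c where g: "g = (a, b, c)" by (cases g)
  have h: "wfw (tgt x) w'" "a = tgt (tgt x, w')" "b \<noteq> a" using assms(2) snoc g wfw_snoc by auto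
  define z where "z = walk x (letters w')"
  have z: "wfa z" "tgt z = a" using walk_letters_wf[OF assms(1) h(1)] h z_def by auto
  have jb: "j \<noteq> b" using assms(3) snoc g by (simp add: tgt_def)
  have e: "walk x (letters w) = mult_gen z b c" using snoc g z_def by (simp add: walk_snoc)
  show ?thesis
  proof (cases "c = k")
    case True
    show ?thesis
    proof (cases "a = j")
      case True
      then show ?thesis using e \<open>c = k\<close> mult_gen_rel[OF z h(3) jb, of k] snoc g z_def
        by (simp add: mult_gen_def Let_def tgt_def)
    next
      case False
      have "snd (mult_gen (tgt x, w) j k) = w' @ [(a, j, k)]" using snoc g \<open>c = k\<close> False
        by (simp add: mult_gen_def Let_def tgt_def)
      then show ?thesis using e \<open>c = k\<close> mult_gen_rel[OF z h(3) jb, of k] False z_def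
        by (simp add: walk_snoc)
    qed
  next
    case False
    have "snd (mult_gen (tgt x, w) j k) = w @ [(b, j, k)]" using snoc g False
      by (simp add: mult_gen_def Let_def tgt_def)
    then show ?thesis by (simp add: walk_snoc)
  qed
qed

lemma translation:
  assumes "wfa x" "admissible N (tgt x, []) ss"
  shows "walk x ss = walk x (letters (snd (walk (tgt x, []) ss)))"
  using assms(2)
proof (induction ss rule: rev_induct)
  case Nil then show ?case by simp
next
  case (snoc s ss)
  obtain j k where s: "s = (j, k)" by (cases s)
  define y where "y = walk (tgt x, []) ss"
  have a1: "admissible N (tgt x, []) ss" and jy: "j \<noteq> tgt y"
    using snoc.prems s admissible_append[of N "(tgt x, [])" ss "[s]"] y_def by auto
  have wy: "wfa y" "fst y = tgt x" using walk_wf[of "(tgt x, [])" N ss] a1 y_def by (auto simp: wfa_def)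
  then have wy': "wfw (tgt x) (snd y)" "y = (tgt x, snd y)" by (auto simp: wfa_def, metis prod.collapse)
  have "walk x (ss @ [s]) = mult_gen (walk x (letters (snd y))) j k"
    using snoc.IH[OF a1] s y_def by (simp add: walk_snoc)
  also have "\<dots> = walk x (letters (snd (mult_gen y j k)))"
    using step_letters[OF assms(1) wy'(1), of j k] jy wy'(2) by simp
  also have "mult_gen y j k = walk (tgt x, []) (ss @ [s])" using s y_def by (simp add: walk_snoc)
  finally show ?case .
qed

definition paths :: "nat \<Rightarrow> arrow \<Rightarrow> nat \<Rightarrow> (nat \<times> int) list set" where
  "paths N x m = {ss. length ss = m \<and> set ss \<subseteq> {1..N} \<times> {-1, 1} \<and> admissible N x ss}"

lemma finite_paths: "finite (paths N x m)"
proof -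
  have "paths N x m \<subseteq> {ss. set ss \<subseteq> {1..N} \<times> {-1, 1} \<and> length ss = m}" by (auto simp: paths_def)
  moreover have "finite {ss. set ss \<subseteq> {1..N} \<times> {-1::int, 1} \<and> length ss = m}"
    by (rule finite_lists_length_eq) auto
  ultimately show ?thesis by (rule finite_subset)
qed

lemma admissible_set: "admissible N x ss \<Longrightarrow> set ss \<subseteq> {1..N} \<times> {-1, 1}"
  by (induction N x ss rule: admissible.induct) auto

lemma paths_Suc: "paths N x (Suc m) = (\<lambda>(s, ss). s # ss) `
   (SIGMA s:({1..N} - {tgt x}) \<times> {-1, 1}. paths N (mult_gen x (fst s) (snd s)) m)"
proof -
  let ?R = "(\<lambda>(s, ss). s # ss) `
   (SIGMA s:({1..N} - {tgt x}) \<times> {-1, 1}. paths N (mult_gen x (fst s) (snd s)) m)"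
  have "ss \<in> paths N x (Suc m) \<longleftrightarrow> ss \<in> ?R" for ss
  proof
    assume "ss \<in> paths N x (Suc m)"
    then obtain j k t where "ss = (j, k) # t" "length t = m" "admissible N x ((j, k) # t)"
      by (auto simp: paths_def length_Suc_conv)
    then show "ss \<in> ?R"
      using admissible_set[of N "mult_gen x j k" t] by (auto simp: paths_def image_iff)
  next
    assume "ss \<in> ?R"
    then show "ss \<in> paths N x (Suc m)" by (auto simp: paths_def)
  qed
  then show ?thesis by blast
qed

locale walkctx =
  fixes N :: nat and p :: "nat \<Rightarrow> nat \<Rightarrow> int \<Rightarrow> real"
  assumes p_pos: "\<And>i j k. i \<in> {1..N} \<Longrightarrow> j \<in> {1..N} \<Longrightarrow> i \<noteq> j \<Longrightarrow> k \<in> {-1, 1} \<Longrightarrow>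
                  0 < p i j k \<and> p i j k < 1"
    and p_sum: "\<And>i. i \<in> {1..N} \<Longrightarrow> (\<Sum>j \<in> {1..N} - {i}. \<Sum>k \<in> {-1, 1}. p i j k) = 1"
begin

lemma pp_nonneg: "wfa x \<Longrightarrow> tgt x \<in> {1..N} \<Longrightarrow> admissible N x ss \<Longrightarrow> 0 \<le> path_prob p x ss"
proof (induction ss arbitrary: x)
  case Nil then show ?case by simp
next
  case (Cons s ss)
  obtain j k where s: "s = (j, k)" by (cases s)
  have h: "j \<in> {1..N}" "j \<noteq> tgt x" "k \<in> {-1, 1}" "admissible N (mult_gen x j k) ss"
    using Cons.prems s by auto
  have "wfa (mult_gen x j k) \<and> tgt (mult_gen x j k) = j" using mult_gen_wf Cons.prems h by auto
  then have "0 \<le> path_prob p (mult_gen x j k) ss" using Cons.IH h by auto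
  moreover have "0 < p (tgt x) j k" using p_pos[of "tgt x" j k] Cons.prems h by auto
  ultimately show ?case using s by simp
qed

lemma total_prob: "wfa x \<Longrightarrow> tgt x \<in> {1..N} \<Longrightarrow> sum (path_prob p x) (paths N x m) = 1"
proof (induction m arbitrary: x)
  case 0
  have "paths N x 0 = {[]}" by (auto simp: paths_def)
  then show ?case by simp
next
  case (Suc m)
  let ?S = "({1..N} - {tgt x}) \<times> {-1::int, 1}"
  have inj: "inj_on (\<lambda>(s, ss). s # ss) (SIGMA s:?S. paths N (mult_gen x (fst s) (snd s)) m)"
    by (auto simp: inj_on_def)
  have "sum (path_prob p x) (paths N x (Suc m)) =
     (\<Sum>(s, ss) \<in> (SIGMA s:?S. paths N (mult_gen x (fst s) (snd s)) m). path_prob p x (s # ss))"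
    unfolding paths_Suc by (subst sum.reindex[OF inj]) (simp add: case_prod_beta)
  also have "\<dots> = (\<Sum>s \<in> ?S. \<Sum>ss \<in> paths N (mult_gen x (fst s) (snd s)) m. path_prob p x (s # ss))"
    by (rule sum.Sigma[symmetric]) (auto simp: finite_paths)
  also have "\<dots> = (\<Sum>s \<in> ?S. p (tgt x) (fst s) (snd s))"
  proof (rule sum.cong[OF refl])
    fix s assume sS: "s \<in> ?S"
    obtain j k where jk: "s = (j, k)" by (cases s)
    then have h: "wfa (mult_gen x (fst s) (snd s)) \<and> tgt (mult_gen x (fst s) (snd s)) = fst s"
      "fst s \<in> {1..N}" using mult_gen_wf[of x j k] Suc.prems sS by auto
    have "(\<Sum>ss \<in> paths N (mult_gen x (fst s) (snd s)) m. path_prob p x (s # ss)) =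
      p (tgt x) (fst s) (snd s) * (\<Sum>ss \<in> paths N (mult_gen x (fst s) (snd s)) m.
          path_prob p (mult_gen x (fst s) (snd s)) ss)"
      by (cases s) (simp add: sum_distrib_left)
    also have "\<dots> = p (tgt x) (fst s) (snd s)" using Suc.IH h by simp
    finally show "(\<Sum>ss \<in> paths N (mult_gen x (fst s) (snd s)) m. path_prob p x (s # ss)) =
      p (tgt x) (fst s) (snd s)" .
  qed
  also have "\<dots> = (\<Sum>j \<in> {1..N} - {tgt x}. \<Sum>k \<in> {-1, 1}. p (tgt x) j k)"
    by (subst sum.cartesian_product) (simp add: case_prod_beta)
  also have "\<dots> = 1" using p_sum Suc.prems by simp
  finally show ?case .
qed

end

context walkctx begin

lemma walk_tgt_range: "tgt x \<in> {1..N} \<Longrightarrow> wfa x \<Longrightarrow> admissible N x ss \<Longrightarrow> tgt (walk x ss) \<in> {1..N}"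
proof (induction ss arbitrary: x)
  case Nil then show ?case by simp
next
  case (Cons s ss)
  obtain j k where s: "s = (j, k)" by (cases s)
  have h: "j \<in> {1..N}" "j \<noteq> tgt x" "admissible N (mult_gen x j k) ss" using Cons.prems s by auto
  have "wfa (mult_gen x j k) \<and> tgt (mult_gen x j k) = j" using mult_gen_wf Cons.prems h by auto
  then show ?case using Cons.IH h s by auto
qed

lemma prefix_bound:
  assumes x: "wfa x" "tgt x \<in> {1..N}" and A: "finite A"
    and Asub: "\<And>s. s \<in> A \<Longrightarrow> admissible N x s \<and> length s \<le> L"
    and pf: "\<And>s s' t. s \<in> A \<Longrightarrow> s' \<in> A \<Longrightarrow> s' = s @ t \<Longrightarrow> t = []"
  shows "sum (path_prob p x) A \<le> 1"
proof -
  let ?D = "SIGMA s:A. paths N (walk x s) (L - length s)"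
  have "sum (path_prob p x) A = (\<Sum>s\<in>A. \<Sum>t\<in>paths N (walk x s) (L - length s). path_prob p x (s @ t))"
  proof (rule sum.cong[OF refl])
    fix s assume sA: "s \<in> A"
    have ad: "admissible N x s" using Asub sA by auto
    have w: "wfa (walk x s)" "tgt (walk x s) \<in> {1..N}" using walk_wf[OF x(1) ad] walk_tgt_range[OF x(2,1) ad] by auto
    have "path_prob p x s = path_prob p x s * sum (path_prob p (walk x s)) (paths N (walk x s) (L - length s))"
      using total_prob[OF w] by simp
    also have "\<dots> = (\<Sum>t\<in>paths N (walk x s) (L - length s). path_prob p x (s @ t))"
      by (simp add: sum_distrib_left path_prob_append)
    finally show "path_prob p x s = (\<Sum>t\<in>paths N (walk x s) (L - length s). path_prob p x (s @ t))" .
  qed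
  also have "\<dots> = (\<Sum>(s, t)\<in>?D. path_prob p x (s @ t))"
    by (rule sum.Sigma) (auto simp: A finite_paths)
  also have "\<dots> = sum (path_prob p x) ((\<lambda>(s, t). s @ t) ` ?D)"
  proof -
    have "inj_on (\<lambda>(s, t). s @ t) ?D"
    proof (rule inj_onI)
      fix a b assume a: "a \<in> ?D" and b: "b \<in> ?D" and e: "(case a of (s, t) \<Rightarrow> s @ t) = (case b of (s, t) \<Rightarrow> s @ t)"
      obtain s t s' t' where ab: "a = (s, t)" "b = (s', t')" by (cases a, cases b)
      have sA: "s \<in> A" "s' \<in> A" using a b ab by auto
      from e ab have "s @ t = s' @ t'" by simp
      then obtain us where "(s = s' @ us \<and> us @ t = t') \<or> (s @ us = s' \<and> t = us @ t')"
        unfolding append_eq_append_conv2 by blast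
      then have u: "us = []" using pf[of s' s us] pf[of s s' us] sA by blast
      with \<open>(s = s' @ us \<and> us @ t = t') \<or> (s @ us = s' \<and> t = us @ t')\<close> have "s = s' \<and> t = t'" by simp
      then show "a = b" using ab by simp
    qed
    then show ?thesis by (subst sum.reindex) (auto simp: case_prod_beta)
  qed
  also have "\<dots> \<le> sum (path_prob p x) (paths N x L)"
  proof (rule sum_mono2[OF finite_paths])
    show "(\<lambda>(s, t). s @ t) ` ?D \<subseteq> paths N x L"
    proof
      fix u assume "u \<in> (\<lambda>(s, t). s @ t) ` ?D"
      then obtain s t where u: "u = s @ t" "s \<in> A" "t \<in> paths N (walk x s) (L - length s)" by auto
      have "admissible N x s" "length s \<le> L" using Asub u(2) by auto
      then show "u \<in> paths N x L" using u admissible_set[of N x s]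
        by (auto simp: paths_def admissible_append)
    qed
    show "0 \<le> path_prob p x b" if "b \<in> paths N x L - (\<lambda>(s, t). s @ t) ` ?D" for b
      using pp_nonneg[OF x(1,2)] that by (auto simp: paths_def)
  qed
  also have "\<dots> = 1" using total_prob[OF x] .
  finally show ?thesis .
qed

lemma weighted_bound:
  assumes x: "wfa x" "tgt x \<in> {1..N}" and A: "finite A" and lam: "0 \<le> lam" "lam < 1"
    and Asub: "\<And>s. s \<in> A \<Longrightarrow> admissible N x s"
  shows "(\<Sum>s\<in>A. lam ^ length s * path_prob p x s) \<le> 1 / (1 - lam)"
proof -
  have "(\<Sum>s\<in>A. lam ^ length s * path_prob p x s) =
     (\<Sum>m\<in>length ` A. \<Sum>s\<in>{s\<in>A. length s = m}. lam ^ length s * path_prob p x s)"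
    by (rule sum.group[symmetric]) (auto simp: A)
  also have "\<dots> \<le> (\<Sum>m\<in>length ` A. lam ^ m)"
  proof (rule sum_mono)
    fix m assume "m \<in> length ` A"
    have "(\<Sum>s\<in>{s\<in>A. length s = m}. lam ^ length s * path_prob p x s) =
        lam ^ m * (\<Sum>s\<in>{s\<in>A. length s = m}. path_prob p x s)"
      by (simp add: sum_distrib_left)
    also have "(\<Sum>s\<in>{s\<in>A. length s = m}. path_prob p x s) \<le> sum (path_prob p x) (paths N x m)"
    proof (rule sum_mono2[OF finite_paths])
      show "{s \<in> A. length s = m} \<subseteq> paths N x m"
      proof
        fix s assume "s \<in> {s \<in> A. length s = m}"
        then show "s \<in> paths N x m" using Asub[of s] admissible_set[of N x s] by (auto simp: paths_def)
      qed
      show "0 \<le> path_prob p x b" if "b \<in> paths N x m - {s \<in> A. length s = m}" for b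
        using pp_nonneg[OF x(1,2)] that by (auto simp: paths_def)
    qed
    then have "lam ^ m * (\<Sum>s\<in>{s\<in>A. length s = m}. path_prob p x s) \<le> lam ^ m * 1"
      using total_prob[OF x] lam by (intro mult_left_mono) auto
    finally show "(\<Sum>s\<in>{s\<in>A. length s = m}. lam ^ length s * path_prob p x s) \<le> lam ^ m" by simp
  qed
  also have "\<dots> \<le> (\<Sum>m. lam ^ m)"
    by (rule sum_le_suminf) (use lam in \<open>auto intro: summable_geometric simp: A\<close>)
  also have "\<dots> = 1 / (1 - lam)" using suminf_geometric[of lam] lam by simp
  finally show ?thesis .
qed

end

definition FP :: "nat \<Rightarrow> nat \<Rightarrow> nat \<Rightarrow> int \<Rightarrow> nat \<Rightarrow> (nat \<times> int) list set" where
  "FP N i j k m = {ss. length ss = m \<and> set ss \<subseteq> {1..N} \<times> {-1, 1} \<and> admissible N (unit_arrow i) ss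
                 \<and> walk (unit_arrow i) ss = (i, [(i, j, k)])
                 \<and> (\<forall>m'<m. walk (unit_arrow i) (take m' ss) \<noteq> (i, [(i, j, k)]))}"

definition FPT :: "nat \<Rightarrow> nat \<Rightarrow> nat \<Rightarrow> int \<Rightarrow> nat \<Rightarrow> (nat \<times> int) list set" where
  "FPT N i j k T = (\<Union>m<T. FP N i j k m)"

lemma fhp_FP: "first_hit_prob N p (unit_arrow i) (i, [(i, j, k)]) m = sum (path_prob p (unit_arrow i)) (FP N i j k m)"
  by (simp add: first_hit_prob_def FP_def)

lemma FP_paths: "FP N i j k m \<subseteq> paths N (unit_arrow i) m"
  by (auto simp: FP_def paths_def)

lemma finite_FP: "finite (FP N i j k m)"
  using finite_subset[OF FP_paths finite_paths] .

lemma finite_FPT: "finite (FPT N i j k T)"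
  by (simp add: FPT_def finite_FP)

lemma FPT_prefix_free:
  assumes "s \<in> FPT N i j k T" "s' \<in> FPT N i j k T" "s' = s @ t"
  shows "t = []"
proof (rule ccontr)
  assume t: "t \<noteq> []"
  have "walk (unit_arrow i) s = (i, [(i, j, k)])" using assms(1) by (auto simp: FPT_def FP_def)
  moreover have "length s < length s'" using assms(3) t by simp
  moreover have "\<forall>m'<length s'. walk (unit_arrow i) (take m' s') \<noteq> (i, [(i, j, k)])"
    using assms(2) by (auto simp: FPT_def FP_def)
  ultimately show False using assms(3) by (metis append_eq_conv_conj)
qed

lemma FPT_weighted: "(\<Sum>s\<in>FPT N i j k T. lam ^ length s * path_prob p (unit_arrow i) s)
   = (\<Sum>m<T. lam ^ m * first_hit_prob N p (unit_arrow i) (i, [(i, j, k)]) m)"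
proof -
  have "(\<Sum>s\<in>FPT N i j k T. lam ^ length s * path_prob p (unit_arrow i) s)
     = (\<Sum>m<T. \<Sum>s\<in>FP N i j k m. lam ^ length s * path_prob p (unit_arrow i) s)"
    unfolding FPT_def
    apply (rule sum.UNION_disjoint)
      apply simp
     apply (simp add: finite_FP)
    apply (auto simp: FP_def)
    done
  also have "\<dots> = (\<Sum>m<T. lam ^ m * first_hit_prob N p (unit_arrow i) (i, [(i, j, k)]) m)"
  proof (rule sum.cong[OF refl])
    fix m
    have "(\<Sum>s\<in>FP N i j k m. lam ^ length s * path_prob p (unit_arrow i) s)
        = (\<Sum>s\<in>FP N i j k m. lam ^ m * path_prob p (unit_arrow i) s)"
      by (rule sum.cong) (auto simp: FP_def)
    then show "(\<Sum>s\<in>FP N i j k m. lam ^ length s * path_prob p (unit_arrow i) s)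
        = lam ^ m * first_hit_prob N p (unit_arrow i) (i, [(i, j, k)]) m"
      by (simp add: fhp_FP sum_distrib_left)
  qed
  finally show ?thesis .
qed

lemma unit_wf: "wfa (unit_arrow i)" "tgt (unit_arrow i) = i"
  by (auto simp: unit_arrow_def wfa_def tgt_def)

context walkctx begin

lemma fhp_nonneg: "i \<in> {1..N} \<Longrightarrow> 0 \<le> first_hit_prob N p (unit_arrow i) (i, [(i, j, k)]) m"
  unfolding fhp_FP using pp_nonneg[OF unit_wf(1)] unit_wf(2)
  by (intro sum_nonneg) (auto simp: FP_def)

lemma fhp_partial: "i \<in> {1..N} \<Longrightarrow> (\<Sum>m<T. first_hit_prob N p (unit_arrow i) (i, [(i, j, k)]) m) \<le> 1"
proof -
  assume i: "i \<in> {1..N}"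
  have "(\<Sum>m<T. first_hit_prob N p (unit_arrow i) (i, [(i, j, k)]) m)
     = (\<Sum>s\<in>FPT N i j k T. 1 ^ length s * path_prob p (unit_arrow i) s)"
    using FPT_weighted[where lam=1 and N=N and i=i and j=j and k=k and T=T and p=p] by simp
  also have "\<dots> = sum (path_prob p (unit_arrow i)) (FPT N i j k T)" by simp
  also have "\<dots> \<le> 1"
  proof (rule prefix_bound[OF unit_wf(1), of _ _ T])
    show "tgt (unit_arrow i) \<in> {1..N}" using i unit_wf by simp
    show "finite (FPT N i j k T)" by (rule finite_FPT)
    show "admissible N (unit_arrow i) s \<and> length s \<le> T" if "s \<in> FPT N i j k T" for s
      using that by (auto simp: FPT_def FP_def)
    show "t = []" if "s \<in> FPT N i j k T" "s' \<in> FPT N i j k T" "s' = s @ t" for s s' t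
      using FPT_prefix_free that by blast
  qed
  finally show ?thesis .
qed

lemma R_summable:
  assumes "i \<in> {1..N}" "0 \<le> lam" "lam \<le> 1"
  shows "summable (\<lambda>m. lam ^ m * first_hit_prob N p (unit_arrow i) (i, [(i, j, k)]) m)"
proof (rule summable_comparison_test')
  show "summable (\<lambda>m. first_hit_prob N p (unit_arrow i) (i, [(i, j, k)]) m)"
    by (rule summableI_nonneg_bounded[where x = 1]) (use assms fhp_nonneg fhp_partial in auto)
  show "norm (lam ^ m * first_hit_prob N p (unit_arrow i) (i, [(i, j, k)]) m)
      \<le> first_hit_prob N p (unit_arrow i) (i, [(i, j, k)]) m" for m
  proof -
    have "lam ^ m \<le> 1" using assms by (simp add: power_le_one)
    then show ?thesis using fhp_nonneg[OF assms(1)] assms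
      by (simp add: abs_mult mult_left_le_one_le)
  qed
qed

lemma R_nonneg:
  assumes "i \<in> {1..N}" "0 \<le> lam" "lam \<le> 1"
  shows "0 \<le> R_fun N p i j k lam"
  unfolding R_fun_def
  by (rule suminf_nonneg[OF R_summable[OF assms]]) (use assms fhp_nonneg in auto)

lemma R_pos:
  assumes "i \<in> {1..N}" "j \<in> {1..N}" "i \<noteq> j" "k \<in> {-1, 1}" "0 < lam" "lam \<le> 1"
  shows "0 < R_fun N p i j k lam"
proof -
  have s1: "[(j, k)] \<in> FP N i j k 1"
    using assms by (auto simp: FP_def unit_arrow_def mult_gen_def tgt_def)
  have "path_prob p (unit_arrow i) [(j, k)] = p i j k" by (simp add: unit_arrow_def tgt_def)
  also have "\<dots> > 0" using p_pos assms by auto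
  finally have "0 < path_prob p (unit_arrow i) [(j, k)]" .
  also have "path_prob p (unit_arrow i) [(j, k)] \<le> first_hit_prob N p (unit_arrow i) (i, [(i, j, k)]) 1"
    unfolding fhp_FP
    by (rule member_le_sum[OF s1 _ finite_FP]) (use pp_nonneg[OF unit_wf(1)] unit_wf(2) assms(1) in \<open>auto simp: FP_def\<close>)
  finally have "0 < lam ^ 1 * first_hit_prob N p (unit_arrow i) (i, [(i, j, k)]) 1" using assms by simp
  also have "\<dots> = (\<Sum>m\<in>{1}. lam ^ m * first_hit_prob N p (unit_arrow i) (i, [(i, j, k)]) m)" by simp
  also have "\<dots> \<le> R_fun N p i j k lam"
    unfolding R_fun_def
    by (rule sum_le_suminf[OF R_summable]) (use assms fhp_nonneg in auto)
  finally show ?thesis .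
qed

end

fun Cset :: "nat \<Rightarrow> nat \<Rightarrow> nat \<Rightarrow> nat \<Rightarrow> int \<Rightarrow> (nat \<times> int) list set" where
  "Cset N T 0 i k = {[]}"
| "Cset N T (Suc n) i k = (\<lambda>(j, s, t). s @ t) `
     (SIGMA j:{1..N} - {i}. SIGMA s:FPT N i j k T. Cset N T n j (-k))"

lemma finite_Cset: "finite (Cset N T n i k)"
  by (induction n arbitrary: i k) (auto simp: finite_FPT)

lemma cat_walk:
  assumes ij: "j \<noteq> i" "k \<in> {-1, 1}" and s: "s \<in> FPT N i j k T"
    and t: "admissible N (unit_arrow j) t" "walk (unit_arrow j) t = (j, u)" "wfw j u"
      "u \<noteq> [] \<longrightarrow> gidx (hd u) = -k"
  shows "admissible N (unit_arrow i) (s @ t) \<and> walk (unit_arrow i) (s @ t) = (i, (i, j, k) # u)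
     \<and> path_prob p (unit_arrow i) (s @ t) = path_prob p (unit_arrow i) s * path_prob p (unit_arrow j) t"
proof -
  have s1: "admissible N (unit_arrow i) s" "walk (unit_arrow i) s = (i, [(i, j, k)])"
    using s by (auto simp: FPT_def FP_def)
  define x1 where "x1 = (i, [(i, j, k)])"
  have x1: "wfa x1" "tgt x1 = j" using ij by (auto simp: x1_def wfa_def tgt_def)
  have ut: "unit_arrow j = (tgt x1, [])" using x1 by (simp add: unit_arrow_def)
  have ti: "admissible N (unit_arrow j) t = admissible N x1 t \<and>
    (admissible N (unit_arrow j) t \<longrightarrow> tgt (walk (unit_arrow j) t) = tgt (walk x1 t)
       \<and> path_prob p (unit_arrow j) t = path_prob p x1 t)"
    using tgt_indep[OF unit_wf(1) x1(1)] unit_wf(2) x1(2) by simp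
  have "walk x1 t = walk x1 (letters (snd (walk (tgt x1, []) t)))"
    using translation[OF x1(1)] t(1) ut by simp
  also have "\<dots> = walk x1 (letters u)" using t(2) ut by simp
  also have "\<dots> = (i, (i, j, k) # u)"
  proof -
    have "k \<noteq> -k" using ij by auto
    then have "wfw (fst x1) (snd x1 @ u)" using t(3,4) ij by (auto simp: x1_def)
    then show ?thesis by (subst walk_letters_app) (auto simp: x1_def)
  qed
  finally show ?thesis using s1 ti t(1) x1_def
    by (simp add: admissible_append walk_append path_prob_append)
qed

lemma Cset_walk:
  assumes "k \<in> {-1, 1}" "t \<in> Cset N T n i k"
  shows "admissible N (unit_arrow i) t \<and> (\<exists>u. walk (unit_arrow i) t = (i, u) \<and> length u = n \<and> wfw i u
          \<and> (u \<noteq> [] \<longrightarrow> gidx (hd u) = k))"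
  using assms
proof (induction n arbitrary: i k t)
  case 0 then show ?case by (auto simp: unit_arrow_def)
next
  case (Suc n)
  have "t \<in> (\<lambda>(j, s, t). s @ t) ` (SIGMA j:{1..N} - {i}. SIGMA s:FPT N i j k T. Cset N T n j (-k))"
    using Suc.prems(2) by simp
  then obtain x where x: "x \<in> (SIGMA j:{1..N} - {i}. SIGMA s:FPT N i j k T. Cset N T n j (-k))"
    "t = (\<lambda>(j, s, t). s @ t) x" by (rule imageE)
  obtain j s t' where "x = (j, s, t')" by (cases x, auto)
  then have jst: "t = s @ t'" "j \<in> {1..N} - {i}" "s \<in> FPT N i j k T" "t' \<in> Cset N T n j (-k)"
    using x by auto
  have mk: "-k \<in> {-1, 1}" using Suc.prems by auto
  obtain u where u: "admissible N (unit_arrow j) t'" "walk (unit_arrow j) t' = (j, u)" "length u = n" "wfw j u"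
    "u \<noteq> [] \<longrightarrow> gidx (hd u) = -k"
    using Suc.IH[OF mk jst(4)] by auto
  have "j \<noteq> i" using jst by auto
  from cat_walk[OF this Suc.prems(1) jst(3) u(1,2,4,5)]
  have "admissible N (unit_arrow i) t \<and> walk (unit_arrow i) t = (i, (i, j, k) # u)" using jst by simp
  then show ?case using u \<open>j \<noteq> i\<close> Suc.prems(1) by auto
qed

context walkctx begin

definition W :: "real \<Rightarrow> nat \<Rightarrow> (nat \<times> int) list set \<Rightarrow> real" where
  "W lam i A = (\<Sum>s\<in>A. lam ^ length s * path_prob p (unit_arrow i) s)"

lemma W_rec:
  assumes k: "k \<in> {-1, 1}"
  shows "W lam i (Cset N T (Suc n) i k) = (\<Sum>j\<in>{1..N} - {i}. W lam i (FPT N i j k T) * W lam j (Cset N T n j (-k)))"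
proof -
  let ?D = "SIGMA j:{1..N} - {i}. SIGMA s:FPT N i j k T. Cset N T n j (-k)"
  have mk: "-k \<in> {-1, 1}" using k by auto
  have key: "admissible N (unit_arrow i) (s @ t) \<and> walk (unit_arrow i) (s @ t) = (i, (i, j, k) # u)
     \<and> path_prob p (unit_arrow i) (s @ t) = path_prob p (unit_arrow i) s * path_prob p (unit_arrow j) t"
    if th: "j \<in> {1..N} - {i}" "s \<in> FPT N i j k T" "t \<in> Cset N T n j (-k)"
       "walk (unit_arrow j) t = (j, u)" for j s t u
  proof -
    obtain u' where u': "admissible N (unit_arrow j) t" "walk (unit_arrow j) t = (j, u')" "wfw j u'"
      "u' \<noteq> [] \<longrightarrow> gidx (hd u') = -k"
      using Cset_walk[OF mk th(3)] by auto
    have "u' = u" using u' th(4) by simp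
    moreover have "j \<noteq> i" using th by auto
    ultimately show ?thesis using cat_walk[OF _ k th(2) u'(1,2,3,4)] by simp
  qed
  have inj: "inj_on (\<lambda>(j, s, t). s @ t) ?D"
  proof (rule inj_onI)
    fix a b assume a: "a \<in> ?D" and b: "b \<in> ?D"
      and e: "(case a of (j, s, t) \<Rightarrow> s @ t) = (case b of (j, s, t) \<Rightarrow> s @ t)"
    obtain j s t j' s' t' where ab: "a = (j, s, t)" "b = (j', s', t')" by (cases a, cases b, auto)
    have m: "j \<in> {1..N} - {i}" "s \<in> FPT N i j k T" "t \<in> Cset N T n j (-k)"
      "j' \<in> {1..N} - {i}" "s' \<in> FPT N i j' k T" "t' \<in> Cset N T n j' (-k)" using a b ab by auto
    have st: "s @ t = s' @ t'" using e ab by simp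
    obtain u where u: "walk (unit_arrow j) t = (j, u)" using Cset_walk[OF mk m(3)] by auto
    obtain u' where u': "walk (unit_arrow j') t' = (j', u')" using Cset_walk[OF mk m(6)] by auto
    have "walk (unit_arrow i) (s @ t) = (i, (i, j, k) # u)" using key[OF m(1-3) u] by simp
    moreover have "walk (unit_arrow i) (s' @ t') = (i, (i, j', k) # u')" using key[OF m(4-6) u'] by simp
    ultimately have jj: "j = j'" using st by simp
    obtain us where "(s = s' @ us \<and> us @ t = t') \<or> (s @ us = s' \<and> t = us @ t')"
      using st unfolding append_eq_append_conv2 by blast
    moreover have "us = []"
      using calculation FPT_prefix_free[of s' N i j k T s us] FPT_prefix_free[of s N i j k T s' us] m jj by blast
    ultimately show "a = b" using ab jj by simp
  qed
  have "W lam i (Cset N T (Suc n) i k) = (\<Sum>(j, s, t)\<in>?D. lam ^ length (s @ t) * path_prob p (unit_arrow i) (s @ t))"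
    unfolding W_def Cset.simps by (subst sum.reindex[OF inj]) (simp add: case_prod_beta)
  also have "\<dots> = (\<Sum>(j, s, t)\<in>?D. (lam ^ length s * path_prob p (unit_arrow i) s) *
                      (lam ^ length t * path_prob p (unit_arrow j) t))"
  proof (rule sum.cong[OF refl])
    fix x assume x: "x \<in> ?D"
    obtain j s t where xe: "x = (j, s, t)" by (cases x, auto)
    have m: "j \<in> {1..N} - {i}" "s \<in> FPT N i j k T" "t \<in> Cset N T n j (-k)" using x xe by auto
    obtain u where u: "walk (unit_arrow j) t = (j, u)" using Cset_walk[OF mk m(3)] by auto
    show "(case x of (j, s, t) \<Rightarrow> lam ^ length (s @ t) * path_prob p (unit_arrow i) (s @ t)) =
          (case x of (j, s, t) \<Rightarrow> (lam ^ length s * path_prob p (unit_arrow i) s) *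
                      (lam ^ length t * path_prob p (unit_arrow j) t))"
      using key[OF m u] xe by (simp add: power_add)
  qed
  also have "\<dots> = (\<Sum>j\<in>{1..N} - {i}. \<Sum>(s, t)\<in>(SIGMA s:FPT N i j k T. Cset N T n j (-k)).
       (lam ^ length s * path_prob p (unit_arrow i) s) * (lam ^ length t * path_prob p (unit_arrow j) t))"
    by (subst sum.Sigma[symmetric]) (auto simp: finite_FPT finite_Cset case_prod_beta)
  also have "\<dots> = (\<Sum>j\<in>{1..N} - {i}. W lam i (FPT N i j k T) * W lam j (Cset N T n j (-k)))"
  proof (rule sum.cong[OF refl])
    fix j
    show "(\<Sum>(s, t)\<in>(SIGMA s:FPT N i j k T. Cset N T n j (-k)).
       (lam ^ length s * path_prob p (unit_arrow i) s) * (lam ^ length t * path_prob p (unit_arrow j) t))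
       = W lam i (FPT N i j k T) * W lam j (Cset N T n j (-k))"
      unfolding W_def
      by (subst sum.Sigma[symmetric]) (auto simp: finite_FPT finite_Cset sum_product)
  qed
  finally show ?thesis .
qed

lemma W_union_bound:
  assumes i: "i \<in> {1..N}" and k: "k \<in> {-1, 1}" and lam: "0 \<le> lam" "lam < 1"
  shows "(\<Sum>n<M. W lam i (Cset N T n i k)) \<le> 1 / (1 - lam)"
proof -
  have "(\<Sum>n<M. W lam i (Cset N T n i k)) = W lam i (\<Union>n<M. Cset N T n i k)"
    unfolding W_def
  proof (rule sum.UNION_disjoint[symmetric])
    show "finite {..<M}" by simp
    show "\<forall>n\<in>{..<M}. finite (Cset N T n i k)" by (simp add: finite_Cset)
    show "\<forall>n\<in>{..<M}. \<forall>n'\<in>{..<M}. n \<noteq> n' \<longrightarrow> Cset N T n i k \<inter> Cset N T n' i k = {}"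
    proof (intro ballI impI)
      fix n n' :: nat assume "n \<noteq> n'"
      show "Cset N T n i k \<inter> Cset N T n' i k = {}"
      proof (rule ccontr)
        assume "Cset N T n i k \<inter> Cset N T n' i k \<noteq> {}"
        then obtain t where "t \<in> Cset N T n i k" "t \<in> Cset N T n' i k" by auto
        then show False using Cset_walk[OF k, of t N T n i] Cset_walk[OF k, of t N T n' i] \<open>n \<noteq> n'\<close> by auto
      qed
    qed
  qed
  also have "\<dots> \<le> 1 / (1 - lam)"
    unfolding W_def
  proof (rule weighted_bound[OF unit_wf(1) _ _ lam])
    show "tgt (unit_arrow i) \<in> {1..N}" using i unit_wf(2) by simp
    show "finite (\<Union>n<M. Cset N T n i k)" by (simp add: finite_Cset)
    show "admissible N (unit_arrow i) s" if "s \<in> (\<Union>n<M. Cset N T n i k)" for s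
      using that Cset_walk[OF k] by blast
  qed
  finally show ?thesis .
qed

end

fun Fr :: "nat \<Rightarrow> (nat \<Rightarrow> nat \<Rightarrow> int \<Rightarrow> real) \<Rightarrow> real \<Rightarrow> nat \<Rightarrow> nat \<Rightarrow> int \<Rightarrow> real" where
  "Fr N p lam 0 i k = 1"
| "Fr N p lam (Suc n) i k = (\<Sum>j\<in>{1..N} - {i}. R_fun N p i j k lam * Fr N p lam n j (-k))"

context walkctx begin

lemma W_FPT_lim:
  assumes "i \<in> {1..N}" "0 \<le> lam" "lam \<le> 1"
  shows "(\<lambda>T. W lam i (FPT N i j k T)) \<longlonglongrightarrow> R_fun N p i j k lam"
  unfolding W_def FPT_weighted R_fun_def
  by (rule summable_LIMSEQ[OF R_summable[OF assms]])

lemma W_lim: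
  assumes "i \<in> {1..N}" "k \<in> {-1, 1}" "0 \<le> lam" "lam \<le> 1"
  shows "(\<lambda>T. W lam i (Cset N T n i k)) \<longlonglongrightarrow> Fr N p lam n i k"
  using assms(1,2)
proof (induction n arbitrary: i k)
  case 0
  then show ?case by (simp add: W_def)
next
  case (Suc n)
  have mk: "-k \<in> {-1, 1}" using Suc.prems by auto
  have "(\<lambda>T. \<Sum>j\<in>{1..N} - {i}. W lam i (FPT N i j k T) * W lam j (Cset N T n j (-k)))
     \<longlonglongrightarrow> (\<Sum>j\<in>{1..N} - {i}. R_fun N p i j k lam * Fr N p lam n j (-k))"
  proof (rule tendsto_sum)
    fix j assume "j \<in> {1..N} - {i}"
    then show "(\<lambda>T. W lam i (FPT N i j k T) * W lam j (Cset N T n j (-k)))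
       \<longlonglongrightarrow> R_fun N p i j k lam * Fr N p lam n j (-k)"
      using W_FPT_lim[OF Suc.prems(1) assms(3,4)] Suc.IH[OF _ mk]
      by (intro tendsto_mult) auto
  qed
  then show ?case using W_rec[OF Suc.prems(2)] by simp
qed

lemma Fr_bound:
  assumes "i \<in> {1..N}" "k \<in> {-1, 1}" "0 \<le> lam" "lam < 1"
  shows "(\<Sum>n<M. Fr N p lam n i k) \<le> 1 / (1 - lam)"
proof -
  have "(\<lambda>T. \<Sum>n<M. W lam i (Cset N T n i k)) \<longlonglongrightarrow> (\<Sum>n<M. Fr N p lam n i k)"
    by (rule tendsto_sum) (use W_lim assms in auto)
  then show ?thesis
    by (rule LIMSEQ_le_const2) (use W_union_bound[OF assms] in auto)
qed

lemma Fr_nonneg: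
  assumes "i \<in> {1..N}" "0 \<le> lam" "lam \<le> 1"
  shows "0 \<le> Fr N p lam n i k"
  using assms(1)
proof (induction n arbitrary: i k)
  case 0 then show ?case by simp
next
  case (Suc n)
  then show ?case using R_nonneg assms(2,3)
    by (auto intro!: sum_nonneg mult_nonneg_nonneg)
qed

end

definition ia :: "nat \<Rightarrow> nat \<Rightarrow> nat" where "ia N a = (if a < N then a + 1 else a - N + 1)"
definition ka :: "nat \<Rightarrow> nat \<Rightarrow> int" where "ka N a = (if a < N then 1 else -1)"

lemma ia_range: "a < 2 * N \<Longrightarrow> ia N a \<in> {1..N}" by (auto simp: ia_def)
lemma ka_range: "ka N a \<in> {-1, 1}" by (auto simp: ka_def)

lemma K_entry:
  assumes "a < 2 * N" "c < 2 * N"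
  shows "K_mat N p Kn lam z $$ (a, c) =
    (if (a < N) \<noteq> (c < N) then B_entry N p Kn (ka N a) lam z (ia N a) (ia N c) else 0)"
  using assms by (auto simp: K_mat_def ia_def ka_def)

lemma K_dims: "dim_row (K_mat N p Kn lam z) = 2 * N" "dim_col (K_mat N p Kn lam z) = 2 * N"
  by (auto simp: K_mat_def)

lemma sum_blocks:
  fixes h :: "nat \<Rightarrow> real"
  assumes "a < 2 * N"
  shows "(\<Sum>c<2 * N. if (a < N) \<noteq> (c < N) then h (ia N c) else 0) = (\<Sum>j\<in>{1..N}. h j)"
proof -
  have split: "{..<2 * N} = {..<N} \<union> {N..<N + N}" by auto
  have s1: "(\<Sum>c<N. h (c + 1)) = (\<Sum>j\<in>{1..N}. h j)"
    using sum.atLeast1_atMost_eq[of h N] by simp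
  have s2: "(\<Sum>c\<in>{N..<N + N}. g c) = (\<Sum>c<N. g (c + N))" for g :: "nat \<Rightarrow> real"
    using sum.shift_bounds_nat_ivl[of g 0 N N] by (simp add: lessThan_atLeast0 add.commute)
  have "(\<Sum>c<2 * N. if (a < N) \<noteq> (c < N) then h (ia N c) else 0)
     = (\<Sum>c<N. if (a < N) \<noteq> (c < N) then h (ia N c) else 0)
       + (\<Sum>c\<in>{N..<N + N}. if (a < N) \<noteq> (c < N) then h (ia N c) else 0)"
    unfolding split by (rule sum.union_disjoint) auto
  also have "\<dots> = (\<Sum>j\<in>{1..N}. h j)"
  proof (cases "a < N")
    case True
    have "(\<Sum>c<N. if (a < N) \<noteq> (c < N) then h (ia N c) else 0) = 0"
      by (rule sum.neutral) (use True in auto)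
    moreover have "(\<Sum>c<N. (if (a < N) \<noteq> (c + N < N) then h (ia N (c + N)) else 0)) = (\<Sum>c<N. h (c + 1))"
      by (rule sum.cong[OF refl]) (use True in \<open>simp add: ia_def\<close>)
    ultimately show ?thesis unfolding s2 s1 by simp
  next
    case False
    have "(\<Sum>c<N. (if (a < N) \<noteq> (c + N < N) then h (ia N (c + N)) else 0)) = 0"
      by (rule sum.neutral) (use False in auto)
    moreover have "(\<Sum>c<N. if (a < N) \<noteq> (c < N) then h (ia N c) else 0) = (\<Sum>c<N. h (c + 1))"
      by (rule sum.cong[OF refl]) (use False in \<open>simp add: ia_def\<close>)
    ultimately show ?thesis unfolding s2 s1 by simp
  qed
  finally show ?thesis .
qed

fun rr :: "real mat \<Rightarrow> nat \<Rightarrow> nat \<Rightarrow> real" where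
  "rr K 0 a = 1"
| "rr K (Suc n) a = (\<Sum>c<dim_row K. K $$ (a, c) * rr K n c)"

locale kctx = walkctx +
  fixes Kn :: "nat \<Rightarrow> nat \<Rightarrow> int \<Rightarrow> real"
  assumes Kn_nonneg: "\<And>i j k. i \<in> {1..N} \<Longrightarrow> j \<in> {1..N} \<Longrightarrow> i \<noteq> j \<Longrightarrow> k \<in> {-1, 1} \<Longrightarrow>
                  0 \<le> Kn i j k"
begin

lemma B_bounds:
  assumes "i \<in> {1..N}" "j \<in> {1..N}" "k \<in> {-1, 1}" "0 < lam" "lam \<le> 1" "0 < z" "z \<le> 1"
  shows "0 \<le> B_entry N p Kn k lam z i j" "B_entry N p Kn k lam z i j \<le> R_fun N p i j k lam"
    "i \<noteq> j \<Longrightarrow> 0 < B_entry N p Kn k lam z i j"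
proof -
  have R0: "0 \<le> R_fun N p i j k lam" using R_nonneg assms by auto
  show "0 \<le> B_entry N p Kn k lam z i j" using R0 by (simp add: B_entry_def)
  show "B_entry N p Kn k lam z i j \<le> R_fun N p i j k lam"
  proof (cases "i = j")
    case True then show ?thesis using R0 by (simp add: B_entry_def)
  next
    case False
    have "z powr Kn i j k \<le> 1" using Kn_nonneg[OF assms(1,2) False assms(3)] assms by (intro powr_le1) auto
    then show ?thesis using R0 False by (simp add: B_entry_def mult_left_le_one_le)
  qed
  show "i \<noteq> j \<Longrightarrow> 0 < B_entry N p Kn k lam z i j"
    using R_pos[OF assms(1,2) _ assms(3,4,5)] assms(6) by (simp add: B_entry_def)
qed

lemma rr_bound:
  assumes lam: "0 < lam" "lam \<le> 1" and z: "0 < z" "z \<le> 1" and a: "a < 2 * N"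
  shows "0 \<le> rr (K_mat N p Kn lam z) n a \<and> rr (K_mat N p Kn lam z) n a \<le> Fr N p lam n (ia N a) (ka N a)"
  using a
proof (induction n arbitrary: a)
  case 0 then show ?case by simp
next
  case (Suc n)
  let ?K = "K_mat N p Kn lam z"
  define h where "h j = (if j = ia N a then 0 else R_fun N p (ia N a) j (ka N a) lam * Fr N p lam n j (- ka N a))" for j
  have ent: "0 \<le> ?K $$ (a, c) * rr ?K n c \<and>
      ?K $$ (a, c) * rr ?K n c \<le> (if (a < N) \<noteq> (c < N) then h (ia N c) else 0)" if c: "c < 2 * N" for c
  proof (cases "(a < N) \<noteq> (c < N)")
    case False
    then show ?thesis using K_entry[OF Suc.prems c] by simp
  next
    case True
    have kc: "ka N c = - ka N a" using True by (auto simp: ka_def)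
    have B: "0 \<le> B_entry N p Kn (ka N a) lam z (ia N a) (ia N c)"
      "B_entry N p Kn (ka N a) lam z (ia N a) (ia N c) \<le> R_fun N p (ia N a) (ia N c) (ka N a) lam"
      using B_bounds[OF ia_range[OF Suc.prems] ia_range[OF c] ka_range lam z] by auto
    have r: "0 \<le> rr ?K n c" "rr ?K n c \<le> Fr N p lam n (ia N c) (- ka N a)" using Suc.IH[OF c] kc by auto
    show ?thesis
    proof (cases "ia N c = ia N a")
      case True
      then show ?thesis using K_entry[OF Suc.prems c] \<open>(a < N) \<noteq> (c < N)\<close> by (simp add: B_entry_def h_def)
    next
      case False
      have "B_entry N p Kn (ka N a) lam z (ia N a) (ia N c) * rr ?K n c \<le>
            R_fun N p (ia N a) (ia N c) (ka N a) lam * Fr N p lam n (ia N c) (- ka N a)"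
        using B r by (intro mult_mono) (auto intro: order_trans)
      then show ?thesis using K_entry[OF Suc.prems c] \<open>(a < N) \<noteq> (c < N)\<close> False B r
        by (simp add: h_def)
    qed
  qed
  have "rr ?K (Suc n) a = (\<Sum>c<2 * N. ?K $$ (a, c) * rr ?K n c)" by (simp add: K_dims)
  moreover have "0 \<le> (\<Sum>c<2 * N. ?K $$ (a, c) * rr ?K n c)" using ent by (intro sum_nonneg) auto
  moreover have "(\<Sum>c<2 * N. ?K $$ (a, c) * rr ?K n c) \<le> (\<Sum>c<2 * N. if (a < N) \<noteq> (c < N) then h (ia N c) else 0)"
    using ent by (intro sum_mono) auto
  moreover have "(\<Sum>c<2 * N. if (a < N) \<noteq> (c < N) then h (ia N c) else 0) = (\<Sum>j\<in>{1..N}. h j)"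
    by (rule sum_blocks[OF Suc.prems])
  moreover have "(\<Sum>j\<in>{1..N}. h j) = Fr N p lam (Suc n) (ia N a) (ka N a)"
  proof -
    have "(\<Sum>j\<in>{1..N}. h j) = h (ia N a) + (\<Sum>j\<in>{1..N} - {ia N a}. h j)"
      by (rule sum.remove) (use ia_range[OF Suc.prems] in auto)
    also have "\<dots> = (\<Sum>j\<in>{1..N} - {ia N a}. R_fun N p (ia N a) j (ka N a) lam * Fr N p lam n j (- ka N a))"
      by (simp add: h_def)
    finally show ?thesis by simp
  qed
  ultimately show ?case by simp
qed

end

lemma pow_nonneg:
  fixes K :: "real mat"
  assumes K: "K \<in> carrier_mat n n" and nn: "\<forall>a<n. \<forall>b<n. 0 \<le> K $$ (a, b)"
  shows "\<forall>a<n. \<forall>b<n. 0 \<le> (K ^\<^sub>m m) $$ (a, b)"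
proof (induction m)
  case 0 then show ?case using K by simp
next
  case (Suc m)
  have KP: "K ^\<^sub>m m \<in> carrier_mat n n" using K by simp
  show ?case
  proof (intro allI impI)
    fix a b assume ab: "a < n" "b < n"
    have "(K ^\<^sub>m Suc m) $$ (a, b) = (\<Sum>i\<in>{0..<n}. (K ^\<^sub>m m) $$ (a, i) * K $$ (i, b))"
      using ab KP K by (simp add: index_mult_mat scalar_prod_def)
    also have "\<dots> \<ge> 0" using Suc nn ab by (intro sum_nonneg mult_nonneg_nonneg) auto
    finally show "0 \<le> (K ^\<^sub>m Suc m) $$ (a, b)" .
  qed
qed

lemma pow_step:
  fixes K :: "real mat"
  assumes K: "K \<in> carrier_mat n n" and nn: "\<forall>a<n. \<forall>b<n. 0 \<le> K $$ (a, b)"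
    and ab: "a < n" "b < n" "c < n"
  shows "(K ^\<^sub>m m) $$ (a, c) * K $$ (c, b) \<le> (K ^\<^sub>m Suc m) $$ (a, b)"
proof -
  have KP: "K ^\<^sub>m m \<in> carrier_mat n n" using K by simp
  have "(K ^\<^sub>m Suc m) $$ (a, b) = (\<Sum>i\<in>{0..<n}. (K ^\<^sub>m m) $$ (a, i) * K $$ (i, b))"
    using ab KP K by (simp add: index_mult_mat scalar_prod_def)
  moreover have "(K ^\<^sub>m m) $$ (a, c) * K $$ (c, b) \<le> (\<Sum>i\<in>{0..<n}. (K ^\<^sub>m m) $$ (a, i) * K $$ (i, b))"
    by (rule member_le_sum) (use ab pow_nonneg[OF K nn, of m] nn in \<open>auto intro!: mult_nonneg_nonneg\<close>)
  ultimately show ?thesis by simp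
qed

lemma pick_index:
  assumes "N \<ge> 3" "x \<in> {1..N}" "y \<in> {1..N}"
  shows "\<exists>c < 2 * N. (c < N) = \<beta> \<and> ia N c \<noteq> x \<and> ia N c \<noteq> y"
proof -
  obtain j where j: "j \<in> {1..N}" "j \<noteq> x" "j \<noteq> y"
  proof -
    consider "(1::nat) \<noteq> x \<and> 1 \<noteq> y" | "(2::nat) \<noteq> x \<and> 2 \<noteq> y" | "(3::nat) \<noteq> x \<and> 3 \<noteq> y"
      by linarith
    then show ?thesis
    proof cases
      case 1 then show ?thesis using that[of 1] assms(1) by auto
    next
      case 2 then show ?thesis using that[of 2] assms(1) by auto
    next
      case 3 then show ?thesis using that[of 3] assms(1) by auto
    qed
  qed
  show ?thesis
  proof (cases \<beta>)
    case True
    then show ?thesis using j by (intro exI[of _ "j - 1"]) (auto simp: ia_def)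
  next
    case False
    then show ?thesis using j by (intro exI[of _ "j - 1 + N"]) (auto simp: ia_def)
  qed
qed

context kctx begin

lemma K_nonneg:
  assumes lam: "0 < lam" "lam \<le> 1" and z: "0 < z" "z \<le> 1" and "a < 2 * N" "c < 2 * N"
  shows "0 \<le> K_mat N p Kn lam z $$ (a, c)"
  using K_entry[OF assms(5,6)] B_bounds(1)[OF ia_range[OF assms(5)] ia_range[OF assms(6)] ka_range lam z]
  by simp

lemma K_pos:
  assumes lam: "0 < lam" "lam \<le> 1" and z: "0 < z" "z \<le> 1" and "a < 2 * N" "c < 2 * N"
    and "(a < N) \<noteq> (c < N)" "ia N a \<noteq> ia N c"
  shows "0 < K_mat N p Kn lam z $$ (a, c)"
  using K_entry[OF assms(5,6)] B_bounds(3)[OF ia_range[OF assms(5)] ia_range[OF assms(6)] ka_range lam z] assms(7,8)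
  by simp

lemma irreducible:
  assumes N3: "N \<ge> 3" and lam: "0 < lam" "lam \<le> 1" and z: "0 < z" "z \<le> 1"
  shows "nonneg_mat (K_mat N p Kn lam z) \<and> irreducible_mat (K_mat N p Kn lam z)"
proof
  let ?K = "K_mat N p Kn lam z"
  have Kc: "?K \<in> carrier_mat (2 * N) (2 * N)" unfolding carrier_mat_def using K_dims by blast
  have nn: "\<And>a b. a < 2 * N \<Longrightarrow> b < 2 * N \<Longrightarrow> 0 \<le> ?K $$ (a, b)"
    using K_nonneg[OF lam z] by blast
  have nn2: "\<forall>a<2 * N. \<forall>b<2 * N. 0 \<le> ?K $$ (a, b)" using nn by blast
  have pe2: "(?K ^\<^sub>m m) $$ (a, c) * ?K $$ (c, b) \<le> (?K ^\<^sub>m Suc m) $$ (a, b)"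
    if "a < 2 * N" "b < 2 * N" "c < 2 * N" for a b c m
    using pow_step[OF Kc nn2 that] .
  show "nonneg_mat ?K" unfolding nonneg_mat_def K_dims by (intro allI impI nn)
  have p1: "(?K ^\<^sub>m 1) $$ (a, c) \<ge> ?K $$ (a, c)" if "a < 2 * N" "c < 2 * N" for a c
    using pe2[of a c a 0] that by simp
  show "irreducible_mat ?K" unfolding irreducible_mat_def K_dims
  proof (intro allI impI)
    fix a b assume a: "a < 2 * N" and b: "b < 2 * N"
    show "\<exists>m. 0 < (?K ^\<^sub>m m) $$ (a, b)"
    proof (cases "a = b")
      case True
      then show ?thesis using a by (intro exI[of _ 0]) (simp add: K_dims)
    next
      case False
      show ?thesis
      proof (cases "(a < N) \<noteq> (b < N)")
        case True
        show ?thesis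
        proof (cases "ia N a = ia N b")
          case False
          then show ?thesis using K_pos[OF lam z a b True] p1[OF a b] by (intro exI[of _ 1]) simp
        next
          case iab: True
          obtain c where c: "c < 2 * N" "(c < N) = (b < N)" "ia N c \<noteq> ia N a"
            using pick_index[OF N3 ia_range[OF a] ia_range[OF a], of "b < N"] by auto
          obtain d where d: "d < 2 * N" "(d < N) = (a < N)" "ia N d \<noteq> ia N c" "ia N d \<noteq> ia N a"
            using pick_index[OF N3 ia_range[OF c(1)] ia_range[OF a], of "a < N"] by auto
          have k1: "0 < ?K $$ (a, c)" using K_pos[OF lam z a c(1)] c True by auto
          have k2: "0 < ?K $$ (c, d)" using K_pos[OF lam z c(1) d(1)] c d True by auto
          have k3: "0 < ?K $$ (d, b)" using K_pos[OF lam z d(1) b] c d True iab by auto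
          have "0 < ?K $$ (a, c) * ?K $$ (c, d) * ?K $$ (d, b)" using k1 k2 k3 by simp
          also have "\<dots> \<le> (?K ^\<^sub>m 1) $$ (a, c) * ?K $$ (c, d) * ?K $$ (d, b)"
            using p1[OF a c(1)] k2 k3 by (intro mult_right_mono) auto
          also have "\<dots> \<le> (?K ^\<^sub>m 2) $$ (a, d) * ?K $$ (d, b)"
            using pe2[OF a d(1) c(1), of 1] k3 by (intro mult_right_mono) (auto simp: numeral_2_eq_2)
          also have "\<dots> \<le> (?K ^\<^sub>m 3) $$ (a, b)"
            using pe2[OF a b d(1), of 2] by (simp add: numeral_3_eq_3 numeral_2_eq_2)
          finally show ?thesis by blast
        qed
      next
        case same: False
        obtain c where c: "c < 2 * N" "(c < N) = (\<not> (a < N))" "ia N c \<noteq> ia N a" "ia N c \<noteq> ia N b"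
          using pick_index[OF N3 ia_range[OF a] ia_range[OF b], of "\<not> (a < N)"] by auto
        have k1: "0 < ?K $$ (a, c)" using K_pos[OF lam z a c(1)] c by auto
        have k2: "0 < ?K $$ (c, b)" using K_pos[OF lam z c(1) b] c same by auto
        have "0 < ?K $$ (a, c) * ?K $$ (c, b)" using k1 k2 by simp
        also have "\<dots> \<le> (?K ^\<^sub>m 1) $$ (a, c) * ?K $$ (c, b)"
          using p1[OF a c(1)] k2 by (intro mult_right_mono) auto
        also have "\<dots> \<le> (?K ^\<^sub>m 2) $$ (a, b)"
          using pe2[OF a b c(1), of 1] by (simp add: numeral_2_eq_2)
        finally show ?thesis by blast
      qed
    qed
  qed
qed

end

context kctx begin

lemma sr_lt1:
  assumes N1: "N \<ge> 1" and lam: "0 < lam" "lam < 1" and z: "0 < z" "z \<le> 1"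
  shows "spectral_radius (map_mat complex_of_real (K_mat N p Kn lam z)) < 1"
proof -
  let ?K = "K_mat N p Kn lam z"
  let ?C = "map_mat complex_of_real ?K"
  have lam1: "lam \<le> 1" using lam by simp
  have Cc: "?C \<in> carrier_mat (2 * N) (2 * N)" unfolding carrier_mat_def using K_dims by simp
  have "2 * N > 0" using N1 by simp
  from spectral_radius_mem_max(1)[OF Cc this]
  obtain mu where mu: "mu \<in> spectrum ?C" "spectral_radius ?C = cmod mu" by auto
  then have "eigenvalue ?C mu" by (simp add: spectrum_def)
  then obtain v where ev: "eigenvector ?C v mu" by (auto simp: eigenvalue_def)
  then have v: "v \<in> carrier_vec (2 * N)" "v \<noteq> 0\<^sub>v (2 * N)" "?C *\<^sub>v v = mu \<cdot>\<^sub>v v"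
    by (auto simp: eigenvector_def K_dims)
  have dv: "dim_vec v = 2 * N" using v(1) by simp
  have comp: "mu * v $ a = (\<Sum>c<2 * N. complex_of_real (?K $$ (a, c)) * v $ c)" if a: "a < 2 * N" for a
  proof -
    have "mu * v $ a = (mu \<cdot>\<^sub>v v) $ a" using a dv by simp
    also have "\<dots> = (?C *\<^sub>v v) $ a" using v(3) by simp
    also have "\<dots> = (\<Sum>c\<in>{0..<2 * N}. ?C $$ (a, c) * v $ c)"
      using a dv by (simp add: K_dims scalar_prod_def)
    also have "\<dots> = (\<Sum>c<2 * N. complex_of_real (?K $$ (a, c)) * v $ c)"
      using a by (intro sum.cong) (auto simp: K_dims lessThan_atLeast0 index_map_mat)
    finally show ?thesis .
  qed
  define m where "m = Max ((\<lambda>c. cmod (v $ c)) ` {..<2 * N})"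
  have vm: "cmod (v $ c) \<le> m" if "c < 2 * N" for c
    unfolding m_def using that by (intro Max_ge) auto
  have nn: "0 \<le> ?K $$ (a, c)" if "a < 2 * N" "c < 2 * N" for a c
    using K_nonneg[OF lam(1) lam1 z that] .
  have claim: "cmod mu ^ n * cmod (v $ a) \<le> m * rr ?K n a" if "a < 2 * N" for n a
    using that
  proof (induction n arbitrary: a)
    case 0 then show ?case using vm by simp
  next
    case (Suc n)
    have "cmod mu ^ Suc n * cmod (v $ a) = cmod mu ^ n * cmod (mu * v $ a)" by (simp add: norm_mult)
    also have "\<dots> = cmod mu ^ n * cmod (\<Sum>c<2 * N. complex_of_real (?K $$ (a, c)) * v $ c)"
      using comp[OF Suc.prems] by simp
    also have "\<dots> \<le> cmod mu ^ n * (\<Sum>c<2 * N. ?K $$ (a, c) * cmod (v $ c))"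
    proof (rule mult_left_mono)
      have "cmod (\<Sum>c<2 * N. complex_of_real (?K $$ (a, c)) * v $ c) \<le> (\<Sum>c<2 * N. cmod (complex_of_real (?K $$ (a, c)) * v $ c))"
        by (rule norm_sum)
      also have "\<dots> = (\<Sum>c<2 * N. ?K $$ (a, c) * cmod (v $ c))"
        using nn[OF Suc.prems] by (intro sum.cong) (auto simp: norm_mult)
      finally show "cmod (\<Sum>c<2 * N. complex_of_real (?K $$ (a, c)) * v $ c) \<le> (\<Sum>c<2 * N. ?K $$ (a, c) * cmod (v $ c))" .
    qed simp
    also have "\<dots> = (\<Sum>c<2 * N. ?K $$ (a, c) * (cmod mu ^ n * cmod (v $ c)))"
      by (simp add: sum_distrib_left algebra_simps)
    also have "\<dots> \<le> (\<Sum>c<2 * N. ?K $$ (a, c) * (m * rr ?K n c))"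
      using Suc.IH nn[OF Suc.prems] by (intro sum_mono mult_left_mono) auto
    also have "\<dots> = m * rr ?K (Suc n) a"
      by (simp add: K_dims sum_distrib_left algebra_simps)
    finally show ?case .
  qed
  obtain a where a: "a < 2 * N" "v $ a \<noteq> 0"
  proof (rule ccontr)
    assume "\<not> thesis"
    then have "\<forall>a<2 * N. v $ a = 0" using that by blast
    then have "v = 0\<^sub>v (2 * N)" using dv by (intro eq_vecI) auto
    then show False using v(2) by simp
  qed
  have va: "0 < cmod (v $ a)" using a by simp
  have bound: "(\<Sum>n<M. cmod mu ^ n) * cmod (v $ a) \<le> m / (1 - lam)" for M
  proof -
    have "(\<Sum>n<M. cmod mu ^ n) * cmod (v $ a) = (\<Sum>n<M. cmod mu ^ n * cmod (v $ a))"
      by (simp add: sum_distrib_right)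
    also have "\<dots> \<le> (\<Sum>n<M. m * rr ?K n a)" by (intro sum_mono claim a(1))
    also have "\<dots> = m * (\<Sum>n<M. rr ?K n a)" by (simp add: sum_distrib_left)
    also have "\<dots> \<le> m * (\<Sum>n<M. Fr N p lam n (ia N a) (ka N a))"
    proof (rule mult_left_mono)
      show "(\<Sum>n<M. rr ?K n a) \<le> (\<Sum>n<M. Fr N p lam n (ia N a) (ka N a))"
        using rr_bound[OF lam(1) lam1 z a(1)] by (intro sum_mono) auto
      show "0 \<le> m" using vm[OF a(1)] norm_ge_zero[of "v $ a"] by linarith
    qed
    also have "\<dots> \<le> m * (1 / (1 - lam))"
    proof (rule mult_left_mono)
      show "(\<Sum>n<M. Fr N p lam n (ia N a) (ka N a)) \<le> 1 / (1 - lam)"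
        by (rule Fr_bound[OF ia_range[OF a(1)] ka_range]) (use lam in auto)
      show "0 \<le> m" using vm[OF a(1)] norm_ge_zero[of "v $ a"] by linarith
    qed
    finally show ?thesis by simp
  qed
  show ?thesis
  proof (rule ccontr)
    assume "\<not> spectral_radius ?C < 1"
    then have mu1: "1 \<le> cmod mu" using mu(2) by simp
    obtain M :: nat where M: "m / (1 - lam) / cmod (v $ a) < real M" using reals_Archimedean2 by blast
    have "real M \<le> (\<Sum>n<M. cmod mu ^ n)"
    proof -
      have "(\<Sum>n<M. (1::real)) \<le> (\<Sum>n<M. cmod mu ^ n)"
        using mu1 by (intro sum_mono one_le_power) auto
      then show ?thesis by simp
    qed
    then have "real M * cmod (v $ a) \<le> m / (1 - lam)"
      using bound[of M] va by (meson mult_right_mono less_imp_le order_trans)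
    then have "real M \<le> m / (1 - lam) / cmod (v $ a)" by (simp only: pos_le_divide_eq[OF va])
    then show False using M by simp
  qed
qed

end

theorem proposition5p8:
  fixes N :: nat and p Kn :: "nat \<Rightarrow> nat \<Rightarrow> int \<Rightarrow> real"
  assumes N3: "N \<ge> 3"
    and p_pos: "\<And>i j k. i \<in> {1..N} \<Longrightarrow> j \<in> {1..N} \<Longrightarrow> i \<noteq> j \<Longrightarrow> k \<in> {-1, 1} \<Longrightarrow>
                  0 < p i j k \<and> p i j k < 1"
    and p_sum: "\<And>i. i \<in> {1..N} \<Longrightarrow> (\<Sum>j \<in> {1..N} - {i}. \<Sum>k \<in> {-1, 1}. p i j k) = 1"
    and Kn_nonneg: "\<And>i j k. i \<in> {1..N} \<Longrightarrow> j \<in> {1..N} \<Longrightarrow> i \<noteq> j \<Longrightarrow> k \<in> {-1, 1} \<Longrightarrow>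
                  0 \<le> Kn i j k"
  shows "(\<forall>lam z. 0 < lam \<and> lam \<le> 1 \<and> 0 < z \<and> z \<le> 1 \<longrightarrow>
            nonneg_mat (K_mat N p Kn lam z) \<and> irreducible_mat (K_mat N p Kn lam z))
       \<and> (\<forall>lam z. 0 < lam \<and> lam < 1 \<and> 0 < z \<and> z \<le> 1 \<longrightarrow>
            spectral_radius (map_mat complex_of_real (K_mat N p Kn lam z)) < 1)"
proof -
  interpret kctx N p Kn
    by unfold_locales (use p_pos p_sum Kn_nonneg in auto)
  show ?thesis using irreducible[OF N3] sr_lt1 N3 by auto
qed

end
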